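(* Let $U\in\mathcal{U}_c$ and $\tau>1$. (a) If $U'(t)/U(t)\le(1-\delta)/t$ for $0<t\le\pi/2$ with some $0<\delta<1$, then for all sufficiently large $n$, every $0<r<1$, and every Carleson square $Q$ with side length $\varepsilon=\ell(Q)\le e^{-\tau\omega_U(n)}$, \[ \mu_{\varphi_U,r}(Q)\le e^{-\delta n/\omega_U(n)}\,\varepsilon. \] (b) If $\eta_U$ is differentiable and $\eta_U'(x)/\eta_U(x)=o(1/x)$ as $x\to\infty$, then for all sufficiently large $n$, every $0<r<1$, and every Carleson square $Q$ with $\varepsilon=\ell(Q)\le e^{-\tau\omega_U(n)}$, \[ \mu_{\varphi_U,r}(Q)\le e^{-8n/\omega_U(n)}\,\varepsilon. \]
   Context: The class $\mathcal{U}$: $U(t)=u(e^{it})$ with $u$ real-valued continuous on $\mathbb{T}$, $u(z)=u(\bar z)$, smooth except possibly at $1$, $U$ even, increasing on $[0,\pi]$, $U(0)=0$, and $h_U(t):=\int_t^\pi U(x)x^{-2}dx\to\infty$ as $t\to0^+$. $\mathcal{U}_c$: those $U\in\mathcal{U}$ with $U'(t)/U(t)\le\alpha/t$ for $0<t\le\pi/2$ for some $0<\alpha<1$. $\varphi_U:=\exp(-u-iv)$ with $u$ the Poisson extension, $v$ its harmonic conjugate. $\eta_U$: $U(t)=e^{-\eta_U(|\log t|)}$ for $0<t\le1$ with $U(t)\le e^{-1}$; $\omega_U$: $\eta_U(x/\omega_U(x))=\omega_U(x)$ for $x\ge0$ with $\eta_U(x)\ge1$. Carleson square: $Q(r_0,t_0)=\{re^{it}\in\overline{\mathbb{D}}:r\ge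 r_0,|t-t_0|\le(1-r_0)\pi\}$, $\ell(Q)=1-r_0$. $\mu_{\varphi,r}(E)=\sigma(\{z\in\mathbb{T}:|\varphi(z)|>r,\varphi(z)\in E\})$ with $\sigma$ normalized Lebesgue measure on $\mathbb{T}$. *)

theory Defs
  imports "HOL-Analysis.Analysis" "HOL-Library.Landau_Symbols"
begin

text \<open>U is the function t \<mapsto> u(e^{it}) on the real line (2pi-periodic).
  Smoothness of u on the circle minus the point 1 = C-infinity of U on the open interval (0, 2 pi).\<close>

definition smooth_on :: "real set \<Rightarrow> (real \<Rightarrow> real) \<Rightarrow> bool" where
  "smooth_on S f \<longleftrightarrow> (\<forall>k. \<forall>x\<in>S. ((deriv ^^ k) f) differentiable (at x))"

definition h_U :: "(real \<Rightarrow> real) \<Rightarrow> real \<Rightarrow> real" where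
  "h_U U t = integral {t..pi} (\<lambda>x. U x / x\<^sup>2)"

definition class_U :: "(real \<Rightarrow> real) \<Rightarrow> bool" where
  "class_U U \<longleftrightarrow>
     continuous_on UNIV U \<and>
     (\<forall>t. U (t + 2*pi) = U t) \<and>
     (\<forall>t. U (-t) = U t) \<and>
     smooth_on {0<..<2*pi} U \<and>
     mono_on {0..pi} U \<and>
     U 0 = 0 \<and>
     filterlim (h_U U) at_top (at_right 0)"

definition class_Uc :: "(real \<Rightarrow> real) \<Rightarrow> bool" where
  "class_Uc U \<longleftrightarrow> class_U U \<and>
     (\<exists>\<alpha>. 0 < \<alpha> \<and> \<alpha> < 1 \<and> (\<forall>t. 0 < t \<and> t \<le> pi/2 \<longrightarrow> deriv U t / U t \<le> \<alpha> / t))"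

text \<open>Herglotz integral: u + i v with u the Poisson extension of U and v its harmonic conjugate
  (normalised by v(0) = 0); phi_U = exp(-u - i v) on the open unit disc.\<close>

definition herglotz_U :: "(real \<Rightarrow> real) \<Rightarrow> complex \<Rightarrow> complex" where
  "herglotz_U U z = integral {-pi..pi} (\<lambda>s. ((cis s + z) / (cis s - z)) * complex_of_real (U s))
                      / complex_of_real (2*pi)"

definition phi_U :: "(real \<Rightarrow> real) \<Rightarrow> complex \<Rightarrow> complex" where
  "phi_U U z = exp (- herglotz_U U z)"

text \<open>Boundary values of phi_U on the circle: radial limits (they exist almost everywhere).\<close>

definition phi_U_bd :: "(real \<Rightarrow> real) \<Rightarrow> real \<Rightarrow> complex" where
  "phi_U_bd U t = Lim (at_left (1::real)) (\<lambda>\<rho>. phi_U U (complex_of_real \<rho> * cis t))"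

definition outer_lebesgue :: "real set \<Rightarrow> ennreal" where
  "outer_lebesgue S = (INF A\<in>{A. A \<in> sets lebesgue \<and> S \<subseteq> A}. emeasure lebesgue A)"

text \<open>mu_{phi,r}(E) = sigma({z in T : |phi(z)| > r, phi(z) in E}), sigma normalised arc length.\<close>

definition mu_phi :: "(real \<Rightarrow> complex) \<Rightarrow> real \<Rightarrow> complex set \<Rightarrow> ennreal" where
  "mu_phi f r E = outer_lebesgue {t \<in> {-pi..<pi}. cmod (f t) > r \<and> f t \<in> E} / ennreal (2*pi)"

text \<open>Carleson square Q(r0,t0); its side length is 1 - r0.\<close>

definition carleson_square :: "real \<Rightarrow> real \<Rightarrow> complex set" where
  "carleson_square r0 t0 =
     {complex_of_real \<rho> * cis t | \<rho> t. r0 \<le> \<rho> \<and> \<rho> \<le> 1 \<and> \<bar>t - t0\<bar> \<le> (1 - r0) * pi}"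

text \<open>eta_U: U(t) = exp(-eta_U(|log t|)), i.e. eta_U(x) = -log U(e^{-x}) (x \<ge> 0).\<close>

definition eta_U :: "(real \<Rightarrow> real) \<Rightarrow> real \<Rightarrow> real" where
  "eta_U U x = - ln (U (exp (- x)))"

definition omega_U :: "(real \<Rightarrow> real) \<Rightarrow> real \<Rightarrow> real" where
  "omega_U U x = (THE w. 1 \<le> w \<and> eta_U U (x / w) = w)"

end

theory Submission
  imports Defs "HOL-Complex_Analysis.Complex_Analysis" "HOL-Real_Asymp.Real_Asymp"
begin


lemma shift_circ: "shiftpath (1/2) (circlepath 0 1) = part_circlepath 0 1 (-pi) pi"
proof
  fix x :: real
  have e: "exp (2 * of_real pi * \<i> * of_real (1/2 + x)) = exp (\<i> * of_real ((1 - x) * (-pi) + x * pi))"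
  proof -
    have "exp (2 * of_real pi * \<i> * of_real (1/2 + x)) = exp (\<i> * of_real ((1 - x) * (-pi) + x * pi) + of_real pi * \<i> * 2)"
      by (rule arg_cong[where f=exp]) (simp add: algebra_simps)
    also have "\<dots> = exp (\<i> * of_real ((1 - x) * (-pi) + x * pi))"
      by (simp add: exp_add exp_two_pi_i mult.commute mult.left_commute)
    finally show ?thesis .
  qed
  have e2: "exp (2 * of_real pi * \<i> * of_real (1/2 + x - 1)) = exp (\<i> * of_real ((1 - x) * (-pi) + x * pi))"
    by (rule arg_cong[where f=exp]) (simp add: algebra_simps)
  show "shiftpath (1/2) (circlepath 0 1) x = part_circlepath 0 1 (-pi) pi x"
    unfolding shiftpath_def circlepath part_circlepath_def linepath_def
    using e e2 by (simp add: scaleR_conv_of_real)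
qed

lemma kernel_int:
  assumes "norm z < 1"
  shows "((\<lambda>s. (cis s + z) / (cis s - z)) has_integral (2*pi)) {-pi..pi}"
proof -
  have c: "((\<lambda>u. 1/(u-z)) has_contour_integral (2 * of_real pi * \<i> * 1)) (circlepath 0 1)"
    using Cauchy_integral_circlepath_simple[of "\<lambda>u. 1" 0 1 z] assms by simp
  have "((\<lambda>u. 1/(u-z)) has_contour_integral (2 * of_real pi * \<i>)) (part_circlepath 0 1 (-pi) pi)"
    using has_contour_integral_shiftpath[OF c, of "1/2"] by (simp add: shift_circ)
  then have "((\<lambda>t. 1/(cis t - z) * \<i> * cis t) has_integral (2 * of_real pi * \<i>)) {-pi..pi}"
    using has_contour_integral_part_circlepath_iff[of "-pi" pi] by simp
  from has_integral_mult_left[OF this, of "-2*\<i>"]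
  have 1: "((\<lambda>t. 2 * cis t / (cis t - z)) has_integral (4 * pi)) {-pi..pi}"
    by (simp add: algebra_simps)
  have 2: "((\<lambda>t. 1::complex) has_integral (2 * pi)) {-pi..pi}"
    using has_integral_const_real[of "1::complex" "-pi" pi] by (simp add: scaleR_conv_of_real)
  have ne: "cis t - z \<noteq> 0" for t
    using assms by (metis eq_iff_diff_eq_0 norm_cis order.irrefl)
  have "((\<lambda>t. 2 * cis t / (cis t - z) - 1) has_integral (4 * pi - 2*pi)) {-pi..pi}"
    using has_integral_diff[OF 1 2] by simp
  moreover have "2 * cis t / (cis t - z) - 1 = (cis t + z) / (cis t - z)" for t
    using ne[of t] by (simp add: field_simps)
  ultimately show ?thesis by simp
qed


lemma deriv_local:
  fixes f :: "real \<Rightarrow> real" and e :: real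
  assumes "DERIV f t :> D" "e > 0"
  shows "\<exists>d>0. \<forall>s. \<bar>s - t\<bar> < d \<longrightarrow> \<bar>f s - f t - D*(s-t)\<bar> \<le> e*\<bar>s-t\<bar>"
proof -
  have "((\<lambda>y. (f y - f t)/(y - t)) \<longlongrightarrow> D) (at t)"
    using assms(1) has_field_derivative_iff by blast
  then have "eventually (\<lambda>y. dist ((f y - f t)/(y - t)) D < e) (at t)"
    using assms(2) unfolding tendsto_iff by blast
  then obtain d where d: "d > 0" "\<And>y. y \<noteq> t \<Longrightarrow> dist y t < d \<Longrightarrow> dist ((f y - f t)/(y - t)) D < e"
    unfolding eventually_at by auto
  show ?thesis
  proof (intro exI[of _ d] conjI allI impI)
    fix s assume s: "\<bar>s - t\<bar> < d"
    show "\<bar>f s - f t - D*(s-t)\<bar> \<le> e*\<bar>s-t\<bar>"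
    proof (cases "s = t")
      case False
      then have "\<bar>(f s - f t)/(s - t) - D\<bar> < e" using d(2)[of s] s by (simp add: dist_real_def)
      then have "\<bar>(f s - f t)/(s - t) - D\<bar> * \<bar>s - t\<bar> \<le> e * \<bar>s-t\<bar>"
        by (simp add: mult_right_mono)
      also have "\<bar>(f s - f t)/(s - t) - D\<bar> * \<bar>s - t\<bar> = \<bar>f s - f t - D*(s-t)\<bar>"
        using False by (simp add: abs_mult[symmetric] field_simps)
      finally show ?thesis .
    qed simp
  qed (use d in auto)
qed

lemma cis_ne:
  assumes "s \<in> {-pi..pi}" "t \<in> {-pi<..<pi}" "s \<noteq> t"
  shows "cis s \<noteq> cis t"
proof
  assume "cis s = cis t"
  then have "sin s = sin t \<and> cos s = cos t" by (metis cis.sel)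
  then obtain n::int where n: "s = t + 2*pi*n" using sin_cos_eq_iff by blast
  have "\<bar>2*pi*n\<bar> < 2*pi" using assms n by auto
  then have "\<bar>real_of_int n\<bar> < 1" by (simp add: abs_mult)
  then have "n = 0" by linarith
  then show False using n assms by simp
qed

lemma norm_cis_diff_ge: "norm (cis s - cis t) \<ge> \<bar>sin (s - t)\<bar>"
proof -
  have "cis s - cis t = cis t * (cis (s - t) - 1)"
    by (simp add: algebra_simps cis_mult)
  then have "norm (cis s - cis t) = norm (cis (s - t) - 1)" by (simp add: norm_mult)
  also have "\<dots> \<ge> \<bar>Im (cis (s - t) - 1)\<bar>" by (rule abs_Im_le_cmod)
  finally show ?thesis by simp
qed

lemma aux_lin: "(a::real) \<le> b + c \<Longrightarrow> c \<le> 1/2 * a \<Longrightarrow> a \<le> 2 * b"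
  by linarith

lemma ratio_bound:
  fixes U :: "real \<Rightarrow> real"
  assumes t: "t \<in> {-pi<..<pi}" and D: "DERIV U t :> D" and cont: "continuous_on {-pi..pi} U"
  shows "\<exists>B. \<forall>s\<in>{-pi..pi}. \<bar>U s - U t\<bar> \<le> B * norm (cis s - cis t)"
proof -
  obtain d1 where d1: "d1 > 0" "\<And>s. \<bar>s - t\<bar> < d1 \<Longrightarrow> \<bar>U s - U t - D*(s-t)\<bar> \<le> 1*\<bar>s-t\<bar>"
    using deriv_local[OF D, of 1] by auto
  have Ds: "DERIV (\<lambda>s. sin (s - t)) t :> 1"
    by (auto intro!: derivative_eq_intros)
  obtain d2 where d2: "d2 > 0" "\<And>s. \<bar>s - t\<bar> < d2 \<Longrightarrow> \<bar>sin (s - t) - sin (t - t) - 1*(s-t)\<bar> \<le> (1/2)*\<bar>s-t\<bar>"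
    using deriv_local[OF Ds, of "1/2"] by auto
  define d where "d = min d1 d2"
  have dpos: "d > 0" using d1 d2 by (simp add: d_def)
  have near: "\<bar>U s - U t\<bar> \<le> (2*\<bar>D\<bar> + 2) * norm (cis s - cis t)" if "\<bar>s - t\<bar> < d" for s
  proof -
    have f1: "\<bar>U s - U t\<bar> \<le> (\<bar>D\<bar> + 1) * \<bar>s - t\<bar>"
      using d1(2)[of s] that abs_mult[of D "s-t"] by (simp add: d_def algebra_simps)
    have f2: "\<bar>s - t\<bar> \<le> 2 * \<bar>sin (s - t)\<bar>"
    proof -
      have a: "\<bar>sin (s - t) - (s - t)\<bar> \<le> (1/2) * \<bar>s - t\<bar>" using d2(2)[of s] that by (simp add: d_def)
      have "\<bar>s - t\<bar> \<le> \<bar>sin (s - t)\<bar> + \<bar>sin (s - t) - (s - t)\<bar>"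
        using abs_triangle_ineq4[of "sin (s-t)" "sin (s - t) - (s - t)"] by simp
      from aux_lin[OF this a] show ?thesis .
    qed
    note f3 = norm_cis_diff_ge[of s t]
    have "\<bar>s - t\<bar> \<le> 2 * norm (cis s - cis t)" using f2 f3 by linarith
    then have "(\<bar>D\<bar> + 1) * \<bar>s - t\<bar> \<le> (\<bar>D\<bar> + 1) * (2 * norm (cis s - cis t))"
      by (rule mult_left_mono) simp
    then have "\<bar>U s - U t\<bar> \<le> (\<bar>D\<bar> + 1) * (2 * norm (cis s - cis t))" using f1 by linarith
    then show ?thesis by (simp add: algebra_simps)
  qed
  define S where "S = {s\<in>{-pi..pi}. d \<le> \<bar>s - t\<bar>}"
  have "compact {-pi..pi::real}" by simp
  then obtain M where M: "\<And>s. s \<in> {-pi..pi} \<Longrightarrow> \<bar>U s\<bar> \<le> M"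
    using compact_imp_bounded[OF compact_continuous_image[OF cont]] unfolding bounded_iff by force
  show ?thesis
  proof (cases "S = {}")
    case True
    have "\<forall>s\<in>{-pi..pi}. \<bar>U s - U t\<bar> \<le> (2*\<bar>D\<bar> + 2) * norm (cis s - cis t)"
    proof
      fix s assume "s \<in> {-pi..pi}"
      then have "\<bar>s - t\<bar> < d" using True unfolding S_def by force
      then show "\<bar>U s - U t\<bar> \<le> (2*\<bar>D\<bar> + 2) * norm (cis s - cis t)" by (rule near)
    qed
    then show ?thesis by blast
  next
    case False
    have "S = {-pi..pi} \<inter> {s. d \<le> \<bar>s - t\<bar>}" by (auto simp: S_def)
    moreover have "closed {s. d \<le> \<bar>s - t\<bar>}"
      by (intro closed_Collect_le continuous_intros)
    ultimately have cS: "compact S" by (simp add: compact_Int_closed)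
    have "continuous_on S (\<lambda>s. norm (cis s - cis t))" by (intro continuous_intros)
    then obtain s0 where s0: "s0 \<in> S" "\<And>s. s \<in> S \<Longrightarrow> norm (cis s0 - cis t) \<le> norm (cis s - cis t)"
      using continuous_attains_inf[OF cS False] by blast
    have "s0 \<noteq> t" using s0(1) dpos by (auto simp: S_def)
    then have m: "norm (cis s0 - cis t) > 0" using cis_ne[of s0 t] s0(1) t by (auto simp: S_def)
    define B where "B = max (2*\<bar>D\<bar> + 2) (2*M / norm (cis s0 - cis t))"
    show ?thesis
    proof (intro exI[of _ B] ballI)
      fix s assume s: "s \<in> {-pi..pi}"
      show "\<bar>U s - U t\<bar> \<le> B * norm (cis s - cis t)"
      proof (cases "\<bar>s - t\<bar> < d")
        case True
        have "(2*\<bar>D\<bar> + 2) * norm (cis s - cis t) \<le> B * norm (cis s - cis t)"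
          by (rule mult_right_mono) (auto simp: B_def)
        then show ?thesis using near[OF True] by linarith
      next
        case False
        then have "s \<in> S" using s by (simp add: S_def)
        have "\<bar>U s - U t\<bar> \<le> 2*M" using M[OF s] M[of t] t by auto
        also have "\<dots> = (2*M / norm (cis s0 - cis t)) * norm (cis s0 - cis t)" using m by simp
        also have "\<dots> \<le> B * norm (cis s - cis t)"
          using s0(2)[OF \<open>s \<in> S\<close>] m M[OF s]
          by (intro mult_mono) (auto simp: B_def)
        finally show ?thesis .
      qed
    qed
  qed
qed



lemma norm_cis_sq: "(norm (cis s - of_real \<rho> * cis t))^2 = 1 - 2*\<rho>*cos (s - t) + \<rho>^2"
proof -
  have "(norm (cis s - of_real \<rho> * cis t))^2 = (cos s - \<rho> * cos t)^2 + (sin s - \<rho> * sin t)^2"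
    unfolding cmod_power2 by simp
  also have "\<dots> = (sin s ^2 + cos s ^2) - 2*\<rho>*(cos s * cos t + sin s * sin t) + \<rho>^2 * (sin t^2 + cos t^2)"
    by (simp only: power2_eq_square algebra_simps)
  also have "\<dots> = 1 - 2*\<rho>*cos (s - t) + \<rho>^2" by (simp add: cos_diff)
  finally show ?thesis .
qed
lemma norm_cis_lower:
  assumes "1/4 \<le> \<rho>" "\<rho> \<le> 1"
  shows "norm (cis s - cis t) / 2 \<le> norm (cis s - of_real \<rho> * cis t)"
proof -
  have a: "(norm (cis s - of_real \<rho> * cis t))^2 = 1 - 2*\<rho>*cos (s - t) + \<rho>^2" by (rule norm_cis_sq)
  have b: "(norm (cis s - cis t))^2 = 2 - 2*cos (s - t)" using norm_cis_sq[of s 1 t] by simp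
  have c: "cos (s-t) \<le> 1" by simp
  have x1: "\<rho> * (2 - 2 * cos (s - t)) \<le> 1 - 2*\<rho>*cos (s - t) + \<rho>^2"
  proof -
    have "1 - 2*\<rho>*cos (s - t) + \<rho>^2 - \<rho> * (2 - 2 * cos (s - t)) = (1 - \<rho>)^2"
      by (simp add: power2_eq_square algebra_simps)
    then show ?thesis by (metis diff_ge_0_iff_ge zero_le_power2)
  qed
  have x2: "(1/4) * (2 - 2 * cos (s - t)) \<le> \<rho> * (2 - 2 * cos (s - t))"
    by (rule mult_right_mono) (use assms c in auto)
  have x3: "(norm (cis s - cis t) / 2)^2 = (1/4) * (2 - 2 * cos (s - t))"
    by (simp add: power_divide b)
  have "(norm (cis s - cis t) / 2)^2 \<le> (norm (cis s - of_real \<rho> * cis t))^2"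
    unfolding x3 a using x1 x2 by linarith
  then show ?thesis
    by (rule power2_le_imp_le) simp
qed

lemma Re_kernel_bd: "Re ((cis s + cis t) / (cis s - cis t)) = 0"
proof -
  have "Re (cis s + cis t) * Re (cis s - cis t) + Im (cis s + cis t) * Im (cis s - cis t) = 0"
    by (simp add: algebra_simps)
  then show ?thesis by (simp only: Re_divide')
qed

lemma herglotz_split:
  fixes U :: "real \<Rightarrow> real"
  assumes z: "norm z < 1" and cont: "continuous_on {-pi..pi} U"
  shows "herglotz_U U z = of_real (U t) +
      integral {-pi..pi} (\<lambda>s. (cis s + z) / (cis s - z) * of_real (U s - U t)) / of_real (2*pi)"
proof -
  have ne: "cis s \<noteq> z" for s
    using z by (metis norm_cis order.irrefl)
  have contK: "continuous_on {-pi..pi} (\<lambda>s. (cis s + z) / (cis s - z))"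
    using ne by (intro continuous_intros) auto
  have i2: "(\<lambda>s. (cis s + z) / (cis s - z) * of_real (U s - U t)) integrable_on {-pi..pi}"
  proof -
    have "continuous_on {-pi..pi} (\<lambda>s. complex_of_real (U s - U t))"
      by (intro continuous_intros cont)
    from continuous_on_mult[OF contK this] show ?thesis
      by (rule integrable_continuous_interval)
  qed
  have h1: "((\<lambda>s. (cis s + z) / (cis s - z) * of_real (U t)) has_integral (2*pi) * of_real (U t)) {-pi..pi}"
    using has_integral_mult_left[OF kernel_int[OF z]] by simp
  have "((\<lambda>s. (cis s + z) / (cis s - z) * of_real (U t) + (cis s + z) / (cis s - z) * of_real (U s - U t))
     has_integral (2*pi) * of_real (U t) + integral {-pi..pi} (\<lambda>s. (cis s + z) / (cis s - z) * of_real (U s - U t))) {-pi..pi}"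
    by (rule has_integral_add[OF h1 integrable_integral[OF i2]])
  moreover have "(\<lambda>s. (cis s + z) / (cis s - z) * of_real (U t) + (cis s + z) / (cis s - z) * of_real (U s - U t))
     = (\<lambda>s. ((cis s + z) / (cis s - z)) * complex_of_real (U s))"
    by (rule ext) (simp add: right_diff_distrib)
  ultimately have "integral {-pi..pi} (\<lambda>s. ((cis s + z) / (cis s - z)) * complex_of_real (U s))
     = (2*pi) * of_real (U t) + integral {-pi..pi} (\<lambda>s. (cis s + z) / (cis s - z) * of_real (U s - U t))"
    by (simp add: integral_unique)
  then show ?thesis unfolding herglotz_U_def by (simp add: field_simps)
qed

lemma radial:
  fixes U :: "real \<Rightarrow> real"
  assumes t: "t \<in> {-pi<..<pi}" and D: "DERIV U t :> D" and cont: "continuous_on {-pi..pi} U"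
  shows "norm (phi_U_bd U t) = exp (- U t)"
proof -
  obtain B where B: "\<And>s. s \<in> {-pi..pi} \<Longrightarrow> \<bar>U s - U t\<bar> \<le> B * norm (cis s - cis t)"
    using ratio_bound[OF t D cont] by blast
  define g where "g s = (cis s + cis t) / (cis s - cis t) * of_real (U s - U t)" for s
  define f where "f r s = (cis s + of_real r * cis t) / (cis s - of_real r * cis t) * of_real (U s - U t)" for r s
  have fbound: "norm (f r s) \<le> 4 * max B 0" if r: "1/2 < r" "r < 1" and s: "s \<in> {-pi..pi}" for r s
  proof (cases "s = t")
    case True then show ?thesis by (simp add: f_def)
  next
    case False
    have pos: "norm (cis s - cis t) > 0" using cis_ne[OF s t False] by simp
    have low: "norm (cis s - cis t) / 2 \<le> norm (cis s - of_real r * cis t)"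
      by (rule norm_cis_lower) (use r in auto)
    have num: "norm (cis s + of_real r * cis t) \<le> 2"
      using norm_triangle_ineq[of "cis s" "of_real r * cis t"] r by (simp add: norm_mult)
    have "norm (f r s) = norm (cis s + of_real r * cis t) / norm (cis s - of_real r * cis t) * \<bar>U s - U t\<bar>"
      unfolding f_def norm_mult norm_divide norm_of_real by simp
    also have "\<dots> \<le> 2 / (norm (cis s - cis t) / 2) * (max B 0 * norm (cis s - cis t))"
    proof (rule mult_mono)
      show "norm (cis s + of_real r * cis t) / norm (cis s - of_real r * cis t) \<le> 2 / (norm (cis s - cis t) / 2)"
        by (rule frac_le) (use pos low num in auto)
      have "\<bar>U s - U t\<bar> \<le> B * norm (cis s - cis t)" by (rule B[OF s])
      also have "\<dots> \<le> max B 0 * norm (cis s - cis t)" by (rule mult_right_mono) auto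
      finally show "\<bar>U s - U t\<bar> \<le> max B 0 * norm (cis s - cis t)" .
    qed (use pos in auto)
    also have "\<dots> = 4 * max B 0" using pos by (simp add: field_simps)
    finally show ?thesis .
  qed
  have fint: "f r integrable_on {-pi..pi}" if r: "1/2 < r" "r < 1" for r
  proof -
    have ne: "cis s - of_real r * cis t \<noteq> 0" for s
    proof
      assume "cis s - of_real r * cis t = 0"
      then have "norm (cis s) = norm (of_real r * cis t)" by simp
      then show False using r by (simp add: norm_mult)
    qed
    have c1: "continuous_on {-pi..pi} (\<lambda>s. (cis s + of_real r * cis t) / (cis s - of_real r * cis t))"
      by (intro continuous_intros) (use ne in auto)
    have c2: "continuous_on {-pi..pi} (\<lambda>s. complex_of_real (U s - U t))"
      by (intro continuous_intros cont)
    show ?thesis unfolding f_def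
      by (rule integrable_continuous_interval[OF continuous_on_mult[OF c1 c2]])
  qed
  have conv: "(\<lambda>n. f (S n) s) \<longlonglongrightarrow> g s" if s: "s \<in> {-pi..pi}" and S: "S \<longlonglongrightarrow> 1" for s and S :: "nat \<Rightarrow> real"
  proof (cases "s = t")
    case True then show ?thesis by (simp add: f_def g_def)
  next
    case False
    have "cis s - cis t \<noteq> 0" using cis_ne[OF s t False] by simp
    have "(\<lambda>n. of_real (S n) :: complex) \<longlonglongrightarrow> of_real 1"
      by (intro tendsto_of_real S)
    then have l1: "(\<lambda>n. of_real (S n) * cis t) \<longlonglongrightarrow> 1 * cis t"
      by (intro tendsto_mult tendsto_const) simp
    have "(\<lambda>n. (cis s + of_real (S n) * cis t) / (cis s - of_real (S n) * cis t) * of_real (U s - U t))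
        \<longlonglongrightarrow> (cis s + 1 * cis t) / (cis s - 1 * cis t) * of_real (U s - U t)"
      using \<open>cis s - cis t \<noteq> 0\<close> by (intro tendsto_mult tendsto_divide tendsto_add tendsto_diff tendsto_const l1) auto
    then show ?thesis unfolding f_def g_def by simp
  qed
  define L where "L = of_real (U t) + integral {-pi..pi} g / of_real (2*pi)"
  have lim: "((\<lambda>r. herglotz_U U (of_real r * cis t)) \<longlongrightarrow> L) (at_left 1)"
  proof (rule tendsto_at_left_sequentially[of "1/2"])
    fix S :: "nat \<Rightarrow> real"
    assume S: "\<And>n. S n < 1" "\<And>n. 1/2 < S n" "S \<longlonglongrightarrow> 1"
    have dc: "(\<lambda>n. integral {-pi..pi} (f (S n))) \<longlonglongrightarrow> integral {-pi..pi} g"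
      by (rule dominated_convergence(2)[where h = "\<lambda>_. 4 * max B 0"])
         (use fint S fbound conv[OF _ S(3)] in auto)
    have eq: "herglotz_U U (of_real (S n) * cis t) = of_real (U t) + integral {-pi..pi} (f (S n)) / of_real (2*pi)" for n
    proof -
      have "norm (of_real (S n) * cis t) < 1" using S(1)[of n] S(2)[of n] by (simp add: norm_mult)
      from herglotz_split[OF this cont, of t] show ?thesis unfolding f_def[abs_def] .
    qed
    show "(\<lambda>n. herglotz_U U (of_real (S n) * cis t)) \<longlonglongrightarrow> L"
      unfolding eq L_def by (intro tendsto_intros dc) simp
  qed simp
  have "((\<lambda>r. phi_U U (of_real r * cis t)) \<longlongrightarrow> exp (- L)) (at_left 1)"
    unfolding phi_U_def by (intro tendsto_intros lim)
  then have "phi_U_bd U t = exp (- L)"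
    unfolding phi_U_bd_def by (intro tendsto_Lim) (simp_all add: trivial_limit_at_left_real)
  moreover have "Re (integral {-pi..pi} g) = 0"
  proof -
    define Q where "Q n = 1 - 1 / (4 * (real n + 1))" for n
    have Q1: "Q \<longlonglongrightarrow> 1" unfolding Q_def
      by real_asymp
    have Qb: "1/2 < Q n" "Q n < 1" for n
      by (auto simp: Q_def field_simps)
    have gi: "g integrable_on {-pi..pi}"
      by (rule dominated_convergence(1)[where f = "\<lambda>n. f (Q n)" and h = "\<lambda>_. 4 * max B 0"])
         (use fint Qb fbound conv[OF _ Q1] in auto)
    have "((\<lambda>s. Re (g s)) has_integral Re (integral {-pi..pi} g)) {-pi..pi}"
      by (rule has_integral_Re[OF integrable_integral[OF gi]])
    moreover have "(\<lambda>s. Re (g s)) = (\<lambda>s. 0)"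
    proof
      fix s
      have re: "Re (z * complex_of_real c) = Re z * c" for z c by simp
      show "Re (g s) = 0" unfolding g_def re Re_kernel_bd by simp
    qed
    ultimately have "((\<lambda>s. 0::real) has_integral Re (integral {-pi..pi} g)) {-pi..pi}" by simp
    then show ?thesis using has_integral_unique[OF _ has_integral_0] by blast
  qed
  ultimately show ?thesis by (simp add: L_def)
qed





lemma classU_facts:
  assumes "class_U U"
  shows "continuous_on UNIV U" "\<And>t. U (t + 2*pi) = U t" "\<And>t. U (-t) = U t"
    "smooth_on {0<..<2*pi} U" "mono_on {0..pi} U" "U 0 = 0" "filterlim (h_U U) at_top (at_right 0)"
  using assms unfolding class_U_def by auto

lemma classU_deriv:
  assumes "class_U U" "t \<in> {0<..<2*pi}"
  shows "DERIV U t :> deriv U t"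
proof -
  have "((deriv ^^ 0) U) differentiable (at t)"
    using classU_facts(4)[OF assms(1)] assms(2) unfolding smooth_on_def by blast
  then show ?thesis by (simp add: DERIV_deriv_iff_real_differentiable)
qed

lemma classU_nonneg:
  assumes "class_U U" "t \<in> {0..pi}"
  shows "U t \<ge> 0"
  using classU_facts(5,6)[OF assms(1)] assms(2) by (metis atLeastAtMost_iff mono_onD order_refl pi_ge_zero)

lemma classU_pos:
  assumes "class_U U" "t \<in> {0<..pi}"
  shows "U t > 0"
proof (rule ccontr)
  assume "\<not> U t > 0"
  with classU_nonneg[OF assms(1), of t] assms(2) have Ut: "U t = 0" by auto
  have mono: "mono_on {0..pi} U" and cont: "continuous_on UNIV U"
    using classU_facts[OF assms(1)] by auto
  have zero: "U x = 0" if "x \<in> {0..t}" for x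
    using classU_nonneg[OF assms(1), of x] mono_onD[OF mono, of x t] that assms(2) Ut by auto
  have const: "h_U U x = h_U U t" if x: "x \<in> {0<..t}" for x
  proof -
    have int: "(\<lambda>y. U y / y\<^sup>2) integrable_on {x..pi}"
      using x by (intro integrable_continuous_interval continuous_intros continuous_on_subset[OF cont]) auto
    have "integral {x..t} (\<lambda>y. U y / y\<^sup>2) + integral {t..pi} (\<lambda>y. U y / y\<^sup>2) = integral {x..pi} (\<lambda>y. U y / y\<^sup>2)"
      by (rule Henstock_Kurzweil_Integration.integral_combine) (use x assms(2) int in auto)
    moreover have "integral {x..t} (\<lambda>y. U y / y\<^sup>2) = 0"
      using x by (subst integral_cong[of _ _ "\<lambda>_. 0"]) (auto simp: zero)
    ultimately show ?thesis unfolding h_U_def by simp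
  qed
  have "eventually (\<lambda>x. h_U U t + 1 \<le> h_U U x) (at_right 0)"
    using classU_facts(7)[OF assms(1)] unfolding filterlim_at_top by blast
  moreover have "eventually (\<lambda>x. x \<in> {0<..<t}) (at_right 0)"
    using assms(2) by (intro eventually_at_right_real) auto
  ultimately have "eventually (\<lambda>x. False) (at_right (0::real))"
  proof eventually_elim
    case (elim x)
    then have "h_U U x = h_U U t" using const[of x] by auto
    with elim show False by linarith
  qed
  then show False by simp
qed

lemma log_deriv_bound:
  assumes U: "class_U U" and b: "\<And>t. 0 < t \<and> t \<le> pi/2 \<longrightarrow> deriv U t / U t \<le> \<beta> / t"
    and ab: "0 < a" "a \<le> b" "b \<le> pi/2"
  shows "ln (U b) - ln (U a) \<le> \<beta> * (ln b - ln a)"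
proof -
  define h where "h y = ln (U y) - \<beta> * ln y" for y
  have "h b \<le> h a"
  proof (rule DERIV_nonpos_imp_nonincreasing[OF ab(2)])
    fix x assume x: "a \<le> x" "x \<le> b"
    have x0: "0 < x" "x \<le> pi/2" using x ab by auto
    have Ux: "U x > 0" using classU_pos[OF U, of x] x0 by auto
    have dU: "DERIV U x :> deriv U x" using classU_deriv[OF U, of x] x0 by auto
    have "DERIV h x :> deriv U x / U x - \<beta> / x"
      unfolding h_def using Ux x0 by (auto intro!: derivative_eq_intros dU simp: field_simps)
    moreover have "deriv U x / U x - \<beta> / x \<le> 0" using b[of x] x0 by simp
    ultimately show "\<exists>y. DERIV h x :> y \<and> y \<le> 0" by blast
  qed
  then show ?thesis unfolding h_def by (simp add: algebra_simps)
qed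

lemma classU_DERIV_any:
  assumes U: "class_U U" and t: "t \<in> {-pi<..<pi}" "t \<noteq> 0"
  shows "\<exists>D. DERIV U t :> D"
proof (cases "t > 0")
  case True
  then show ?thesis using classU_deriv[OF U, of t] t by auto
next
  case False
  then have "-t \<in> {0<..<2*pi}" using t by auto
  from classU_deriv[OF U this] have d: "DERIV U (-t) :> deriv U (-t)" .
  have "DERIV (\<lambda>x. U (-x)) t :> deriv U (-t) * (-1)"
  proof -
    have m: "DERIV (\<lambda>x. -x) t :> -1" by (auto intro!: derivative_eq_intros)
    show ?thesis using DERIV_chain2[where g="\<lambda>x. -x" and x=t, OF _ m] d by simp
  qed
  moreover have "(\<lambda>x. U (-x)) = U" using classU_facts(3)[OF U] by auto
  ultimately show ?thesis by auto
qed

lemma mu_bound: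
  assumes U: "class_U U" and r0: "0 < r0" "r0 < 1" and B: "B \<ge> 0"
    and hB: "\<And>t. t \<in> {0<..pi} \<Longrightarrow> U t \<le> - ln r0 \<Longrightarrow> t \<le> B"
  shows "mu_phi (phi_U_bd U) r (carleson_square r0 t0) \<le> ennreal (B / pi)"
proof -
  define S where "S = {t \<in> {-pi..<pi}. cmod (phi_U_bd U t) > r \<and> phi_U_bd U t \<in> carleson_square r0 t0}"
  define A where "A = {-pi, 0} \<union> {-B..B}"
  have contU: "continuous_on {-pi..pi} U" using classU_facts(1)[OF U] continuous_on_subset by blast
  have SA: "S \<subseteq> A"
  proof
    fix t assume tS: "t \<in> S"
    show "t \<in> A"
    proof (cases "t = -pi \<or> t = 0")
      case True then show ?thesis by (auto simp: A_def)
    next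
      case False
      then have t: "t \<in> {-pi<..<pi}" "t \<noteq> 0" using tS by (auto simp: S_def)
      obtain D where "DERIV U t :> D" using classU_DERIV_any[OF U t] by blast
      from radial[OF t(1) this contU] have nrm: "norm (phi_U_bd U t) = exp (- U t)" .
      from tS obtain \<rho> th where eq: "phi_U_bd U t = complex_of_real \<rho> * cis th" and rho: "r0 \<le> \<rho>" "\<rho> \<le> 1"
        by (auto simp: S_def carleson_square_def)
      have "norm (phi_U_bd U t) = \<rho>" using eq rho r0 by (simp add: norm_mult)
      then have "r0 \<le> exp (- U t)" using nrm rho by simp
      then have "ln r0 \<le> - U t" using r0 by (metis exp_le_cancel_iff exp_ln)
      then have le: "U \<bar>t\<bar> \<le> - ln r0" using classU_facts(3)[OF U, of t] by (cases "t \<ge> 0") auto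
      have "\<bar>t\<bar> \<in> {0<..pi}" using t by auto
      from hB[OF this le] show ?thesis by (auto simp: A_def)
    qed
  qed
  have cA: "closed A" unfolding A_def by (intro closed_Un) auto
  have Asets: "A \<in> sets lborel" using cA by simp
  have Aleb: "A \<in> sets lebesgue" using cA by simp
  have "outer_lebesgue S \<le> emeasure lebesgue A"
    unfolding outer_lebesgue_def by (rule INF_lower) (use SA Aleb in blast)
  also have "emeasure lebesgue A = emeasure lborel A"
    using Asets by (simp add: emeasure_completion main_part_sets)
  also have "\<dots> \<le> emeasure lborel {-pi, 0} + emeasure lborel {-B..B}"
    unfolding A_def by (rule emeasure_subadditive) auto
  also have "emeasure lborel {-pi, 0::real} = 0"
    by (rule emeasure_lborel_countable) simp
  also have "emeasure lborel {-B..B} = ennreal (2*B)" using B by simp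
  finally have o: "outer_lebesgue S \<le> ennreal (2*B)" by simp
  have "mu_phi (phi_U_bd U) r (carleson_square r0 t0) = outer_lebesgue S / ennreal (2*pi)"
    unfolding mu_phi_def S_def ..
  also have "\<dots> \<le> ennreal (2*B) / ennreal (2*pi)" by (rule divide_right_mono_ennreal[OF o])
  also have "\<dots> = ennreal (B / pi)" using B by (simp add: divide_ennreal)
  finally show ?thesis .
qed



lemma U_exp_pos:
  assumes U: "class_U U" and y: "y \<ge> 0"
  shows "U (exp (- y)) > 0"
proof -
  have "exp (-y) \<le> 1" using y by simp
  also have "1 \<le> pi" using pi_gt3 by simp
  finally show ?thesis using classU_pos[OF U, of "exp (-y)"] by simp
qed

lemma eta_mono:
  assumes U: "class_U U" and y: "0 \<le> y" "y \<le> y'"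
  shows "eta_U U y \<le> eta_U U y'"
proof -
  have mono: "mono_on {0..pi} U" using classU_facts(5)[OF U] .
  have "exp (-y) \<le> 1" using y by simp
  also have "1 \<le> pi" using pi_gt3 by simp
  finally have ey: "exp (-y) \<le> pi" .
  have "exp (-y') \<le> exp (-y)" using y by simp
  then have ey': "exp (-y') \<le> pi" using ey by linarith
  have m1: "exp (-y') \<in> {0..pi}" unfolding atLeastAtMost_iff by (intro conjI exp_ge_zero ey')
  have m2: "exp (-y) \<in> {0..pi}" unfolding atLeastAtMost_iff by (intro conjI exp_ge_zero ey)
  have "U (exp (-y')) \<le> U (exp (-y))"
    by (rule mono_onD[OF mono m1 m2]) fact
  moreover have "U (exp (-y')) > 0" using U_exp_pos[OF U, of y'] y by simp
  ultimately show ?thesis unfolding eta_U_def by simp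
qed

lemma eta_isCont:
  assumes U: "class_U U" and y: "y \<ge> 0"
  shows "isCont (eta_U U) y"
proof -
  have cU: "isCont U x" for x
    using classU_facts(1)[OF U] by (simp add: continuous_on_eq_continuous_at)
  have "isCont (\<lambda>y. - ln (U (exp (- y)))) y"
    using U_exp_pos[OF U y] by (intro continuous_intros continuous_at_compose[OF _ cU, unfolded o_def]) auto
  then show ?thesis unfolding eta_U_def[abs_def] .
qed

lemma eta_big:
  assumes U: "class_U U"
  shows "\<exists>Y\<ge>0. \<forall>y\<ge>Y. M \<le> eta_U U y"
proof -
  have cU: "isCont U 0"
    using classU_facts(1)[OF U] by (simp add: continuous_on_eq_continuous_at)
  then have "(U \<longlongrightarrow> 0) (at 0)" using classU_facts(6)[OF U] by (simp add: isCont_def)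
  then have "eventually (\<lambda>x. dist (U x) 0 < exp (-M)) (at 0)"
    unfolding tendsto_iff by simp
  then obtain d where d: "d > 0" "\<And>x. x \<noteq> 0 \<Longrightarrow> dist x 0 < d \<Longrightarrow> dist (U x) 0 < exp (-M)"
    unfolding eventually_at by auto
  define Y where "Y = max 0 (1 - ln d)"
  show ?thesis
  proof (intro exI[of _ Y] conjI allI impI)
    fix y assume y: "Y \<le> y"
    have "exp (-y) \<le> exp (ln d - 1)" using y by (simp add: Y_def)
    also have "\<dots> < exp (ln d)" by simp
    also have "\<dots> = d" using d by simp
    finally have "U (exp (-y)) < exp (-M)" using d(2)[of "exp (-y)"] by (simp add: dist_real_def) 
    moreover have "U (exp (-y)) > 0" using U_exp_pos[OF U, of y] y by (simp add: Y_def)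
    ultimately have "ln (U (exp (-y))) < -M" by (metis ln_less_cancel_iff exp_gt_zero ln_exp)
    then show "M \<le> eta_U U y" unfolding eta_U_def by simp
  qed (simp add: Y_def)
qed

lemma omega_ok:
  assumes U: "class_U U" and n: "n \<ge> 0" "1 \<le> eta_U U n"
  shows "1 \<le> omega_U U n \<and> eta_U U (n / omega_U U n) = omega_U U n"
proof -
  define F where "F w = eta_U U (n / w) - w" for w
  have "\<exists>w. 1 \<le> w \<and> w \<le> eta_U U n \<and> F w = 0"
  proof (rule IVT2)
    have "n / eta_U U n \<le> n" using n by (simp add: divide_le_eq mult_le_cancel_left1)
    then have "eta_U U (n / eta_U U n) \<le> eta_U U n"
      using n by (intro eta_mono[OF U]) auto
    then show "F (eta_U U n) \<le> 0" by (simp add: F_def)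
    show "0 \<le> F 1" using n by (simp add: F_def)
    show "1 \<le> eta_U U n" by (rule n(2))
    show "\<forall>x. 1 \<le> x \<and> x \<le> eta_U U n \<longrightarrow> isCont F x"
    proof (intro allI impI)
      fix x :: real assume x: "1 \<le> x \<and> x \<le> eta_U U n"
      have "isCont (\<lambda>w. n / w) x" using x by (intro continuous_intros) auto
      moreover have "isCont (eta_U U) (n / x)" using x n by (intro eta_isCont[OF U]) auto
      ultimately have "isCont (\<lambda>w. eta_U U (n / w)) x" using continuous_at_compose[of x "\<lambda>w. n/w" "eta_U U"] by (simp add: o_def)
      then show "isCont F x" unfolding F_def[abs_def] by (intro continuous_intros)
    qed
  qed
  then obtain w where w: "1 \<le> w" "eta_U U (n / w) = w" by (auto simp: F_def)
  have uniq: "w' = w" if w': "1 \<le> w'" "eta_U U (n / w') = w'" for w'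
  proof (rule ccontr)
    assume "w' \<noteq> w"
    then consider "w' < w" | "w < w'" by linarith
    then show False
    proof cases
      case 1
      then have "n / w \<le> n / w'" using w' n by (intro divide_left_mono) auto
      then have "eta_U U (n / w) \<le> eta_U U (n / w')" using w n by (intro eta_mono[OF U]) auto
      then show False using 1 w w' by simp
    next
      case 2
      then have "n / w' \<le> n / w" using w n by (intro divide_left_mono) auto
      then have "eta_U U (n / w') \<le> eta_U U (n / w)" using w' n by (intro eta_mono[OF U]) auto
      then show False using 2 w w' by simp
    qed
  qed
  have "omega_U U n = w" unfolding omega_U_def
    by (rule the1_equality) (use w uniq in blast)+
  then show ?thesis using w by simp
qed

lemma omega_eventually:
  assumes U: "class_U U"
  shows "\<exists>N::nat. \<forall>n\<ge>N. 1 \<le> omega_U U (real n) \<and> eta_U U (real n / omega_U U (real n)) = omega_U U (real n)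
            \<and> M \<le> real n / omega_U U (real n) \<and> M \<le> omega_U U (real n)"
proof -
  obtain Y1 where Y1: "Y1 \<ge> 0" "\<And>y. y \<ge> Y1 \<Longrightarrow> max M 1 \<le> eta_U U y"
    using eta_big[OF U, of "max M 1"] by blast
  define M2 where "M2 = max (max M 0) Y1"
  define N where "N = nat \<lceil>max Y1 (M2 * max (eta_U U M2) 1) + 1\<rceil>"
  show ?thesis
  proof (intro exI[of _ N] allI impI)
    fix n assume nN: "N \<le> n"
    have nb: "real n \<ge> max Y1 (M2 * max (eta_U U M2) 1) + 1"
      using nN unfolding N_def by linarith
    have "1 \<le> eta_U U (real n)" using Y1(2)[of "real n"] nb by auto
    from omega_ok[OF U _ this] have om: "1 \<le> omega_U U (real n)" "eta_U U (real n / omega_U U (real n)) = omega_U U (real n)"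
      by auto
    define w where "w = omega_U U (real n)"
    define m where "m = real n / w"
    have w1: "1 \<le> w" "eta_U U m = w" using om by (auto simp: w_def m_def)
    have m0: "m \<ge> 0" using w1 by (simp add: m_def)
    have nmw: "real n = m * w" using w1 by (simp add: m_def)
    have mM2: "M2 \<le> m"
    proof (rule ccontr)
      assume "\<not> M2 \<le> m"
      then have "eta_U U m \<le> eta_U U M2" using m0 by (intro eta_mono[OF U]) auto
      then have "w \<le> max (eta_U U M2) 1" using w1 by simp
      then have "m * w \<le> M2 * max (eta_U U M2) 1"
        using \<open>\<not> M2 \<le> m\<close> m0 w1 by (intro mult_mono) auto
      then show False using nb nmw by linarith
    qed
    have "max M 1 \<le> eta_U U m" using Y1(2)[of m] mM2 by (simp add: M2_def)
    then have "M \<le> w" using w1 by simp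
    moreover have "M \<le> m" using mM2 by (simp add: M2_def)
    ultimately show "1 \<le> omega_U U (real n) \<and> eta_U U (real n / omega_U U (real n)) = omega_U U (real n)
            \<and> M \<le> real n / omega_U U (real n) \<and> M \<le> omega_U U (real n)"
      using om by (simp add: w_def m_def)
  qed
qed



lemma U_exp_eta:
  assumes U: "class_U U" and m: "m \<ge> 0" and w: "eta_U U m = w"
  shows "U (exp (-m)) = exp (-w)"
proof -
  have "U (exp (-m)) > 0" using U_exp_pos[OF U m] .
  then show ?thesis using w unfolding eta_U_def by (metis exp_ln minus_minus)
qed

lemma ln_r0_bound:
  fixes \<epsilon> :: real
  assumes "0 < \<epsilon>" "\<epsilon> \<le> 1/2"
  shows "- ln (1 - \<epsilon>) \<le> 2 * \<epsilon>"
proof -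
  have "- \<epsilon> - 2 * \<epsilon>\<^sup>2 \<le> ln (1 - \<epsilon>)" using ln_one_minus_pos_lower_bound[of \<epsilon>] assms by simp
  moreover have "2 * \<epsilon>\<^sup>2 \<le> \<epsilon>"
  proof -
    have "\<epsilon> * \<epsilon> \<le> \<epsilon> * (1/2)" using assms by (intro mult_left_mono) auto
    then show ?thesis by (simp add: power2_eq_square)
  qed
  ultimately show ?thesis by linarith
qed

lemma t_small:
  assumes U: "class_U U" and m: "m \<ge> 0" and w: "eta_U U m = w" and tau: "(\<tau> - 1) * w > ln 2"
    and eps: "0 < \<epsilon>" "\<epsilon> \<le> exp (- \<tau> * w)" and t: "t \<in> {0<..pi}" and Ut: "U t \<le> 2 * \<epsilon>"
  shows "t < exp (-m)" "ln (U t) \<le> ln 2 + ln \<epsilon>"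
proof -
  have Ue: "U (exp (-m)) = exp (-w)" by (rule U_exp_eta[OF U m w])
  show "t < exp (-m)"
  proof (rule ccontr)
    assume "\<not> t < exp (-m)"
    then have "U (exp (-m)) \<le> U t"
      using t by (intro mono_onD[OF classU_facts(5)[OF U]]) auto
    then have "exp (-w) \<le> 2 * exp (- \<tau> * w)" using Ue Ut eps by simp
    then have "ln (exp (-w)) \<le> ln (2 * exp (- \<tau> * w))" by (subst ln_le_cancel_iff) auto
    then have "-w \<le> ln 2 - \<tau> * w" by (simp add: ln_mult)
    then show False using tau by (simp add: algebra_simps)
  qed
  have "U t > 0" using classU_pos[OF U t] .
  then have "ln (U t) \<le> ln (2 * \<epsilon>)" using Ut by simp
  then show "ln (U t) \<le> ln 2 + ln \<epsilon>" using eps by (simp add: ln_mult)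
qed

lemma conclude_t:
  assumes "0 < t" "0 < \<epsilon>" "- ln t \<ge> - ln \<epsilon> + c * m - ln pi"
  shows "t \<le> pi * exp (- c * m) * \<epsilon>"
proof -
  have "t = exp (ln t)" using assms by simp
  also have "\<dots> \<le> exp (ln \<epsilon> - c * m + ln pi)" using assms(3) by simp
  also have "\<dots> = pi * exp (- c * m) * \<epsilon>"
    using assms by (simp add: exp_add exp_diff exp_minus field_simps)
  finally show ?thesis .
qed

lemma part_a:
  fixes U :: "real \<Rightarrow> real" and \<tau> \<delta> :: real
  assumes Uc: "class_Uc U" and tau: "\<tau> > 1"
    and d: "0 < \<delta>" "\<delta> < 1" and hd: "\<forall>t. 0 < t \<and> t \<le> pi/2 \<longrightarrow> deriv U t / U t \<le> (1 - \<delta>) / t"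
  shows "\<exists>N::nat. \<forall>n\<ge>N. \<forall>r r0 t0. 0 < r \<and> r < 1 \<and> 0 \<le> r0 \<and> r0 < 1 \<and>
            1 - r0 \<le> exp (- \<tau> * omega_U U (real n)) \<longrightarrow>
            mu_phi (phi_U_bd U) r (carleson_square r0 t0)
              \<le> ennreal (exp (- \<delta> * real n / omega_U U (real n)) * (1 - r0))"
proof -
  have U: "class_U U" using Uc unfolding class_Uc_def by blast
  define \<beta> where "\<beta> = 1 - \<delta>"
  have b0: "0 < \<beta>" "\<beta> < 1" using d by (auto simp: \<beta>_def)
  have hb: "\<And>t. 0 < t \<and> t \<le> pi/2 \<longrightarrow> deriv U t / U t \<le> \<beta> / t" using hd by (simp add: \<beta>_def)
  have U1: "U 1 > 0" using classU_pos[OF U, of 1] pi_gt3 by simp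
  define C where "C = - ln (U 1)"
  have ln2: "ln (2::real) > 0" by simp
  define M where "M = max 1 (max (2 * ln 2 / (\<tau> - 1)) (max (ln 2 / \<beta>^2) ((ln 2 + \<bar>C\<bar>) / (\<beta> * \<delta> * (\<tau> - 1)))))"
  obtain N where N: "\<And>n. n \<ge> N \<Longrightarrow> 1 \<le> omega_U U (real n) \<and> eta_U U (real n / omega_U U (real n)) = omega_U U (real n)
            \<and> M \<le> real n / omega_U U (real n) \<and> M \<le> omega_U U (real n)"
    using omega_eventually[OF U, of M] by blast
  show ?thesis
  proof (intro exI[of _ N] allI impI)
    fix n :: nat and r r0 t0 :: real
    assume nN: "N \<le> n" and hyp: "0 < r \<and> r < 1 \<and> 0 \<le> r0 \<and> r0 < 1 \<and> 1 - r0 \<le> exp (- \<tau> * omega_U U (real n))"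
    define w where "w = omega_U U (real n)"
    define m where "m = real n / w"
    have wm: "1 \<le> w" "eta_U U m = w" "M \<le> m" "M \<le> w" using N[OF nN] by (auto simp: w_def m_def)
    have m0: "m \<ge> 0" using wm M_def by linarith
    have wR1: "2 * ln 2 / (\<tau> - 1) \<le> w" using wm(4) M_def by linarith
    then have R1: "(\<tau> - 1) * w \<ge> 2 * ln 2" using tau by (simp add: field_simps)
    then have R1': "(\<tau> - 1) * w > ln 2" using ln2 by linarith
    define \<epsilon> where "\<epsilon> = 1 - r0"
    have eps: "0 < \<epsilon>" "\<epsilon> \<le> exp (- \<tau> * w)" using hyp by (auto simp: \<epsilon>_def w_def)
    have "\<tau> * w = (\<tau> - 1) * w + w" by (simp add: algebra_simps)
    then have "\<tau> * w \<ge> ln 2" using R1' wm(1) by linarith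
    then have "exp (- \<tau> * w) \<le> exp (- ln 2)" by simp
    then have eps2: "\<epsilon> \<le> 1/2" using eps by (simp add: exp_minus)
    have r0: "0 < r0" "r0 < 1" using eps2 hyp by (auto simp: \<epsilon>_def)
    have Uem: "ln (U (exp (-m))) = -w" using U_exp_eta[OF U m0 wm(2)] by simp
    have eml: "exp (-m) \<le> pi/2" using m0 pi_gt3 exp_le_one_iff[of "-m"] by linarith
    have wle: "w \<le> \<beta> * m + C"
    proof -
      have "ln (U 1) - ln (U (exp (-m))) \<le> \<beta> * (ln 1 - ln (exp (-m)))"
        using m0 pi_gt3 by (intro log_deriv_bound[OF U hb]) auto
      then show ?thesis using Uem by (simp add: C_def)
    qed
    have R3: "\<beta>^2 * m + (\<delta> * \<tau> - 1) * w \<ge> ln 2"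
    proof (cases "\<delta> * \<tau> \<ge> 1")
      case True
      have "ln 2 / \<beta>^2 \<le> m" using wm(3) M_def by linarith
      then have "ln 2 \<le> \<beta>^2 * m" using b0 by (simp add: field_simps)
      moreover have "(\<delta> * \<tau> - 1) * w \<ge> 0" using True wm(1) by simp
      ultimately show ?thesis by linarith
    next
      case False
      have "(\<delta> * \<tau> - 1) * w \<ge> (\<delta> * \<tau> - 1) * (\<beta> * m + C)"
        using False wle by (intro mult_left_mono_neg) auto
      moreover have "(ln 2 + \<bar>C\<bar>) / (\<beta> * \<delta> * (\<tau> - 1)) \<le> m" using wm(3) M_def by linarith
      then have "ln 2 + \<bar>C\<bar> \<le> \<beta> * \<delta> * (\<tau> - 1) * m" using b0 d tau by (simp add: field_simps)
      moreover have "(1 - \<delta> * \<tau>) * C \<le> \<bar>C\<bar>"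
      proof -
        have "0 < 1 - \<delta> * \<tau>" "1 - \<delta> * \<tau> \<le> 1" using False d tau by auto
        then have "(1 - \<delta> * \<tau>) * C \<le> (1 - \<delta> * \<tau>) * \<bar>C\<bar>" by (intro mult_left_mono) auto
        moreover have "(1 - \<delta> * \<tau>) * \<bar>C\<bar> \<le> 1 * \<bar>C\<bar>" using \<open>1 - \<delta> * \<tau> \<le> 1\<close> by (intro mult_right_mono) auto
        ultimately show ?thesis by simp
      qed
      moreover have "\<beta>^2 * m + (\<delta> * \<tau> - 1) * (\<beta> * m + C) = \<beta> * \<delta> * (\<tau> - 1) * m - (1 - \<delta> * \<tau>) * C"
        by (simp add: \<beta>_def power2_eq_square algebra_simps)
      ultimately show ?thesis by linarith
    qed
    define B where "B = pi * exp (- \<delta> * m) * \<epsilon>"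
    have B0: "B \<ge> 0" using eps by (simp add: B_def)
    have hB: "t \<le> B" if t: "t \<in> {0<..pi}" and Ut: "U t \<le> - ln r0" for t
    proof -
      have "- ln r0 \<le> 2 * \<epsilon>" using ln_r0_bound[OF eps(1) eps2] by (simp add: \<epsilon>_def)
      then have Ut2: "U t \<le> 2 * \<epsilon>" using Ut by linarith
      have ts: "t < exp (-m)" "ln (U t) \<le> ln 2 + ln \<epsilon>"
        using t_small[OF U m0 wm(2) R1' eps t Ut2] by auto
      have "ln (U (exp (-m))) - ln (U t) \<le> \<beta> * (ln (exp (-m)) - ln t)"
        using t ts eml by (intro log_deriv_bound[OF U hb]) auto
      then have key: "\<beta> * (- ln t - m) \<ge> - ln \<epsilon> - w - ln 2" using Uem ts(2) by (simp add: algebra_simps)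
      define x where "x = - ln t"
      define L where "L = - ln \<epsilon>"
      have L: "L \<ge> \<tau> * w"
      proof -
        have "ln \<epsilon> \<le> - \<tau> * w" using eps by (metis exp_gt_zero ln_exp ln_le_cancel_iff)
        then show ?thesis by (simp add: L_def)
      qed
      have dL: "\<delta> * L \<ge> \<delta> * (\<tau> * w)" using L d by (simp add: mult_left_mono)
      have lnpi: "\<beta> * ln pi \<ge> 0" using b0 pi_gt3 by simp
      have "\<beta> * x \<ge> \<beta> * (L + \<delta> * m - ln pi)"
      proof -
        have "\<beta> * x = \<beta> * (x - m) + \<beta> * m" by (simp add: algebra_simps)
        moreover have "\<beta> * m = \<beta>^2 * m + \<beta> * \<delta> * m" by (simp add: \<beta>_def power2_eq_square algebra_simps)
        moreover have "L = \<beta> * L + \<delta> * L" by (simp add: \<beta>_def algebra_simps)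
        moreover have "\<beta> * (L + \<delta> * m - ln pi) = \<beta> * L + \<beta> * \<delta> * m - \<beta> * ln pi" by (simp add: algebra_simps)
        moreover have "\<delta> * (\<tau> * w) = (\<delta> * \<tau> - 1) * w + w" by (simp add: algebra_simps)
        ultimately show ?thesis using key dL lnpi R3 unfolding x_def[symmetric] L_def[symmetric] by linarith
      qed
      then have "x \<ge> L + \<delta> * m - ln pi" using b0 by simp
      then show "t \<le> B" unfolding B_def using t eps
        by (intro conclude_t) (auto simp: x_def L_def)
    qed
    have "mu_phi (phi_U_bd U) r (carleson_square r0 t0) \<le> ennreal (B / pi)"
      by (rule mu_bound[OF U r0 B0 hB])
    also have "B / pi = exp (- \<delta> * real n / omega_U U (real n)) * (1 - r0)"
      by (simp add: B_def m_def w_def \<epsilon>_def)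
    finally show "mu_phi (phi_U_bd U) r (carleson_square r0 t0)
              \<le> ennreal (exp (- \<delta> * real n / omega_U U (real n)) * (1 - r0))" .
  qed
qed

lemma part_b:
  fixes U :: "real \<Rightarrow> real" and \<tau> :: real
  assumes Uc: "class_Uc U" and tau: "\<tau> > 1"
    and diff: "\<forall>x\<ge>0. 1 \<le> eta_U U x \<longrightarrow> eta_U U differentiable (at x)"
    and osm: "(\<lambda>x. deriv (eta_U U) x / eta_U U x) \<in> o[at_top](\<lambda>x. 1 / x)"
  shows "\<exists>N::nat. \<forall>n\<ge>N. \<forall>r r0 t0. 0 < r \<and> r < 1 \<and> 0 \<le> r0 \<and> r0 < 1 \<and>
            1 - r0 \<le> exp (- \<tau> * omega_U U (real n)) \<longrightarrow>
            mu_phi (phi_U_bd U) r (carleson_square r0 t0)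
              \<le> ennreal (exp (- 8 * real n / omega_U U (real n)) * (1 - r0))"
proof -
  have U: "class_U U" using Uc unfolding class_Uc_def by blast
  obtain \<alpha> where a: "0 < \<alpha>" "\<alpha> < 1" and ha: "\<And>t. 0 < t \<and> t \<le> pi/2 \<longrightarrow> deriv U t / U t \<le> \<alpha> / t"
    using Uc unfolding class_Uc_def by blast
  define \<eta> where "\<eta> = eta_U U"
  define \<tau>' where "\<tau>' = (\<tau> + 1) / 2"
  have tau': "1 < \<tau>'" "\<tau>' < \<tau>" using tau by (auto simp: \<tau>'_def)
  define K :: nat where "K = nat \<lceil>9 / (\<tau>' - 1)\<rceil> + 1"
  have K1: "real K \<ge> 1" by (simp add: K_def)
  have KK: "(real K - 1) * (\<tau>' - 1) \<ge> 9"
  proof -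
    have "real K - 1 \<ge> 9 / (\<tau>' - 1)" unfolding K_def by linarith
    then show ?thesis using tau' by (simp add: field_simps)
  qed
  have Kpos: "(1 / real K) > 0" using K1 by simp
  have "eventually (\<lambda>x. norm (deriv \<eta> x / \<eta> x) \<le> (1 / real K) * norm (1 / x)) at_top"
    using landau_o.smallD[OF osm Kpos] by (simp add: \<eta>_def)
  then obtain X0 where X0: "\<And>x. x \<ge> X0 \<Longrightarrow> norm (deriv \<eta> x / \<eta> x) \<le> (1 / real K) * norm (1 / x)"
    unfolding eventually_at_top_linorder by blast
  have U1: "U 1 > 0" using classU_pos[OF U, of 1] pi_gt3 by simp
  define C where "C = - ln (U 1)"
  have ln2: "ln (2::real) > 0" by simp
  define M where "M = max 1 (max X0 (max (2 * ln 2 / (\<tau> - 1)) (\<bar>C\<bar> / (1 - \<alpha>))))"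
  obtain N where N: "\<And>n. n \<ge> N \<Longrightarrow> 1 \<le> omega_U U (real n) \<and> eta_U U (real n / omega_U U (real n)) = omega_U U (real n)
            \<and> M \<le> real n / omega_U U (real n) \<and> M \<le> omega_U U (real n)"
    using omega_eventually[OF U, of M] by blast
  show ?thesis
  proof (intro exI[of _ N] allI impI)
    fix n :: nat and r r0 t0 :: real
    assume nN: "N \<le> n" and hyp: "0 < r \<and> r < 1 \<and> 0 \<le> r0 \<and> r0 < 1 \<and> 1 - r0 \<le> exp (- \<tau> * omega_U U (real n))"
    define w where "w = omega_U U (real n)"
    define m where "m = real n / w"
    have wm: "1 \<le> w" "eta_U U m = w" "M \<le> m" "M \<le> w" using N[OF nN] by (auto simp: w_def m_def)
    have m1: "m \<ge> 1" using wm M_def by linarith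
    have m0: "m \<ge> 0" using m1 by simp
    have mX: "m \<ge> X0" using wm M_def by linarith
    have wR1: "2 * ln 2 / (\<tau> - 1) \<le> w" using wm(4) M_def by linarith
    then have R1: "(\<tau> - 1) * w \<ge> 2 * ln 2" using tau by (simp add: field_simps)
    then have R1': "(\<tau> - 1) * w > ln 2" using ln2 by linarith
    have Rt: "(\<tau> - \<tau>') * w \<ge> ln 2" using R1 by (simp add: \<tau>'_def field_simps)
    define \<epsilon> where "\<epsilon> = 1 - r0"
    have eps: "0 < \<epsilon>" "\<epsilon> \<le> exp (- \<tau> * w)" using hyp by (auto simp: \<epsilon>_def w_def)
    have "\<tau> * w = (\<tau> - 1) * w + w" by (simp add: algebra_simps)
    then have "\<tau> * w \<ge> ln 2" using R1' wm(1) by linarith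
    then have "exp (- \<tau> * w) \<le> exp (- ln 2)" by simp
    then have eps2: "\<epsilon> \<le> 1/2" using eps by (simp add: exp_minus)
    have r0: "0 < r0" "r0 < 1" using eps2 hyp by (auto simp: \<epsilon>_def)
    have Uem: "ln (U (exp (-m))) = -w" using U_exp_eta[OF U m0 wm(2)] by simp
    have wle: "w \<le> \<alpha> * m + C"
    proof -
      have "ln (U 1) - ln (U (exp (-m))) \<le> \<alpha> * (ln 1 - ln (exp (-m)))"
        using m0 pi_gt3 by (intro log_deriv_bound[OF U ha]) auto
      then show ?thesis using Uem by (simp add: C_def)
    qed
    have wlm: "w \<le> m"
    proof -
      have "\<bar>C\<bar> / (1 - \<alpha>) \<le> m" using wm(3) M_def by linarith
      then have "\<bar>C\<bar> \<le> (1 - \<alpha>) * m" using a by (simp add: field_simps)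
      moreover have "(1 - \<alpha>) * m = m - \<alpha> * m" by (simp add: algebra_simps)
      moreover have "C \<le> \<bar>C\<bar>" by simp
      ultimately show ?thesis using wle by linarith
    qed
    define B where "B = pi * exp (- 8 * m) * \<epsilon>"
    have B0: "B \<ge> 0" using eps by (simp add: B_def)
    have hB: "t \<le> B" if t: "t \<in> {0<..pi}" and Ut: "U t \<le> - ln r0" for t
    proof -
      have "- ln r0 \<le> 2 * \<epsilon>" using ln_r0_bound[OF eps(1) eps2] by (simp add: \<epsilon>_def)
      then have Ut2: "U t \<le> 2 * \<epsilon>" using Ut by linarith
      have ts: "t < exp (-m)" "ln (U t) \<le> ln 2 + ln \<epsilon>"
        using t_small[OF U m0 wm(2) R1' eps t Ut2] by auto
      define x where "x = - ln t"
      define L where "L = - ln \<epsilon>"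
      have L: "L \<ge> \<tau> * w"
      proof -
        have "ln \<epsilon> \<le> - \<tau> * w" using eps by (metis exp_gt_zero ln_exp ln_le_cancel_iff)
        then show ?thesis by (simp add: L_def)
      qed
      have "ln t < ln (exp (-m))" using ts(1) t by (subst ln_less_cancel_iff) auto
      then have xm: "m < x" unfolding x_def by simp
      have etax: "\<eta> x = - ln (U t)" unfolding \<eta>_def eta_U_def x_def using t by simp
      then have etaxL: "\<eta> x \<ge> L - ln 2" using ts(2) by (simp add: L_def)
      define h where "h y = ln (\<eta> y) - (1 / real K) * ln y" for y
      have "h x \<le> h m"
      proof (rule DERIV_nonpos_imp_nonincreasing[of m x h])
        show "m \<le> x" using xm by simp
        fix y assume y: "m \<le> y" "y \<le> x"
        have y0: "y > 0" "y \<ge> X0" using y m1 mX by auto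
        have ey: "\<eta> y \<ge> 1" using eta_mono[OF U m0 y(1)] wm(1,2) by (simp add: \<eta>_def)
        have "\<eta> differentiable (at y)" using diff y0 ey by (simp add: \<eta>_def)
        then have dy: "DERIV \<eta> y :> deriv \<eta> y" by (simp add: DERIV_deriv_iff_real_differentiable)
        have "DERIV h y :> deriv \<eta> y / \<eta> y - (1 / real K) / y"
          unfolding h_def using ey y0 K1 by (auto intro!: derivative_eq_intros dy simp: field_simps)
        moreover have "deriv \<eta> y / \<eta> y \<le> (1 / real K) / y"
        proof -
          have "deriv \<eta> y / \<eta> y \<le> \<bar>deriv \<eta> y / \<eta> y\<bar>" by (rule abs_ge_self)
          also have "\<dots> \<le> (1 / real K) * \<bar>1 / y\<bar>" using X0[OF y0(2)] by (simp only: real_norm_def)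
          also have "\<dots> = (1 / real K) / y" using y0 by simp
          finally show ?thesis .
        qed
        ultimately show "\<exists>z. DERIV h y :> z \<and> z \<le> 0" by force
      qed
      then have lnle: "ln (\<eta> x) - ln w \<le> (1 / real K) * (ln x - ln m)"
        using wm(2) by (simp add: h_def \<eta>_def algebra_simps)
      define q where "q = (L - ln 2) / w"
      have q: "q \<ge> \<tau>'"
      proof -
        have "L - ln 2 \<ge> \<tau>' * w" using L Rt by (simp add: algebra_simps)
        then show ?thesis using wm(1) by (simp add: q_def field_simps)
      qed
      have q0: "q > 0" using q tau' by simp
      have "\<eta> x \<ge> q * w" using etaxL wm(1) by (simp add: q_def)
      moreover have "q * w > 0" using q0 wm(1) by simp
      ultimately have "ln (q * w) \<le> ln (\<eta> x)" by (subst ln_le_cancel_iff) auto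
      then have "ln (\<eta> x) \<ge> ln q + ln w" using q0 wm(1) by (simp add: ln_mult)
      then have "ln q \<le> (1 / real K) * (ln x - ln m)" using lnle by simp
      then have "real K * ln q \<le> ln x - ln m" using K1 by (simp add: field_simps)
      then have "ln (q ^ K) \<le> ln (x / m)" using q0 m1 xm by (simp add: ln_realpow ln_div)
      then have qK: "q ^ K \<le> x / m" using q0 m1 xm by simp
      have "1 + real K * (q - 1) \<le> (1 + (q - 1)) ^ K"
        by (rule Bernoulli_inequality) (use q0 in simp)
      then have "1 + real K * (q - 1) \<le> x / m" using qK by simp
      moreover have "real K * (q - 1) \<ge> q + 8"
      proof -
        have "(real K - 1) * (q - 1) \<ge> (real K - 1) * (\<tau>' - 1)"
          using q K1 by (intro mult_left_mono) auto
        then show ?thesis using KK by (simp add: algebra_simps)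
      qed
      ultimately have "q + 9 \<le> x / m" by simp
      then have "m * (q + 9) \<le> x" using m1 by (simp add: field_simps)
      moreover have "m * q \<ge> L - ln 2"
      proof -
        have "L - ln 2 \<ge> 0" using q0 wm(1) by (simp add: q_def zero_less_divide_iff)
        then have "w * q \<le> m * q" using wlm q0 by (intro mult_right_mono) auto
        moreover have "w * q = L - ln 2" using wm(1) by (simp add: q_def)
        ultimately show ?thesis by simp
      qed
      moreover have "ln 2 \<le> m" using m1 ln_2_less_1 by linarith
      moreover have "ln pi \<ge> 0" using pi_gt3 by simp
      moreover have "m * (q + 9) = m * q + 9 * m" by (simp add: algebra_simps)
      ultimately have "x \<ge> L + 8 * m - ln pi" by linarith
      then show "t \<le> B" unfolding B_def using t eps
        by (intro conclude_t) (auto simp: x_def L_def)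
    qed
    have "mu_phi (phi_U_bd U) r (carleson_square r0 t0) \<le> ennreal (B / pi)"
      by (rule mu_bound[OF U r0 B0 hB])
    also have "B / pi = exp (- 8 * real n / omega_U U (real n)) * (1 - r0)"
      by (simp add: B_def m_def w_def \<epsilon>_def)
    finally show "mu_phi (phi_U_bd U) r (carleson_square r0 t0)
              \<le> ennreal (exp (- 8 * real n / omega_U U (real n)) * (1 - r0))" .
  qed
qed


theorem lemma6p2:
  fixes U :: "real \<Rightarrow> real" and \<tau> :: real
  assumes "class_Uc U" and "\<tau> > 1"
  shows
    "(\<forall>\<delta>. 0 < \<delta> \<and> \<delta> < 1 \<and>
          (\<forall>t. 0 < t \<and> t \<le> pi/2 \<longrightarrow> deriv U t / U t \<le> (1 - \<delta>) / t) \<longrightarrow>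
       (\<exists>N::nat. \<forall>n\<ge>N. \<forall>r r0 t0. 0 < r \<and> r < 1 \<and> 0 \<le> r0 \<and> r0 < 1 \<and>
            1 - r0 \<le> exp (- \<tau> * omega_U U (real n)) \<longrightarrow>
            mu_phi (phi_U_bd U) r (carleson_square r0 t0)
              \<le> ennreal (exp (- \<delta> * real n / omega_U U (real n)) * (1 - r0))))
     \<and>
     ((\<forall>x\<ge>0. 1 \<le> eta_U U x \<longrightarrow> eta_U U differentiable (at x)) \<and>
      (\<lambda>x. deriv (eta_U U) x / eta_U U x) \<in> o[at_top](\<lambda>x. 1 / x) \<longrightarrow>
       (\<exists>N::nat. \<forall>n\<ge>N. \<forall>r r0 t0. 0 < r \<and> r < 1 \<and> 0 \<le> r0 \<and> r0 < 1 \<and>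
            1 - r0 \<le> exp (- \<tau> * omega_U U (real n)) \<longrightarrow>
            mu_phi (phi_U_bd U) r (carleson_square r0 t0)
              \<le> ennreal (exp (- 8 * real n / omega_U U (real n)) * (1 - r0))))"
    using part_a[OF assms] part_b[OF assms] by blast

end
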